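(* Let $A$ be a differential ring and $X=\operatorname{Spec}^\Delta A$. For every $\eta\in\mathcal O'(X)$ there exist $b_1,\ldots,b_m\in A$ such that $\iota'(b_i)\eta\in\iota'(A)$ for all $i$ and $\{b_1,\ldots,b_m\}=A$.
   Context: All rings are commutative with unit. A differential ring is a ring with finitely many pairwise commuting derivations. $X=\operatorname{Spec}^\Delta A$ is the set of prime ideals of $A$ closed under all derivations, with the Kolchin topology (closed sets $V(E)=\{\mathfrak p\in X: E\subseteq\mathfrak p\}$, $E\subseteq A$); for $s\in A$, $X_s=\{\mathfrak p\in X: s\notin\mathfrak p\}$. For $E\subseteq A$, $\{E\}$ is the smallest radical differential ideal containing $E$. For $\mathfrak p\in X$, $K(\mathfrak p)$ is the fraction field of $A/\mathfrak p$ with the induced derivations. For an open $U\subseteq X$, $\mathcal O'(U)$ is the set of functions $f$ on $U$ with $f(\mathfrak p)\in K(\mathfrak p)$ that are regular at every point of $U$, where $f$ is regular at $\mathfrak p$ if there exist an open neighborhood $W\subseteq U$ of $\mathfrak p$ and $a,b\in A$ with $b\notin\mathfrak q$ and $f(\mathfrak q)=a/b$ in $K(\mathfrak q)$ for all $\mathfrak q\in W$. With pointwise operations and pointwise derivations, $\mathcal O'(U)$ is a differential ring. The differential homomorphism $\iota'\colon A\to\mathcal O'(X)$ sends $a$ to the function $\mathfrak p\mapsto (a \bmod \mathfrak p)\in K(\mathfrak p)$. *)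

theory Defs
  imports "HOL-Algebra.Algebra"
begin

definition derivation :: "('a, 'b) ring_scheme \<Rightarrow> ('a \<Rightarrow> 'a) \<Rightarrow> bool" where
  "derivation R D \<longleftrightarrow>
     D \<in> carrier R \<rightarrow> carrier R \<and>
     (\<forall>x\<in>carrier R. \<forall>y\<in>carrier R. D (x \<oplus>\<^bsub>R\<^esub> y) = D x \<oplus>\<^bsub>R\<^esub> D y) \<and>
     (\<forall>x\<in>carrier R. \<forall>y\<in>carrier R.
        D (x \<otimes>\<^bsub>R\<^esub> y) = (x \<otimes>\<^bsub>R\<^esub> D y) \<oplus>\<^bsub>R\<^esub> (D x \<otimes>\<^bsub>R\<^esub> y))"

definition diff_ring :: "('a, 'b) ring_scheme \<Rightarrow> ('a \<Rightarrow> 'a) set \<Rightarrow> bool" where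
  "diff_ring R Ds \<longleftrightarrow> cring R \<and> finite Ds \<and> (\<forall>D\<in>Ds. derivation R D) \<and>
     (\<forall>D\<in>Ds. \<forall>E\<in>Ds. \<forall>x\<in>carrier R. D (E x) = E (D x))"

definition diff_closed :: "('a \<Rightarrow> 'a) set \<Rightarrow> 'a set \<Rightarrow> bool" where
  "diff_closed Ds I \<longleftrightarrow> (\<forall>D\<in>Ds. \<forall>x\<in>I. D x \<in> I)"

definition radical_ideal :: "('a, 'b) ring_scheme \<Rightarrow> 'a set \<Rightarrow> bool" where
  "radical_ideal R I \<longleftrightarrow> ideal I R \<and>
     (\<forall>a\<in>carrier R. \<forall>n::nat. a [^]\<^bsub>R\<^esub> n \<in> I \<longrightarrow> a \<in> I)"

definition rad_diff_ideal_gen ::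
  "('a, 'b) ring_scheme \<Rightarrow> ('a \<Rightarrow> 'a) set \<Rightarrow> 'a set \<Rightarrow> 'a set" where
  "rad_diff_ideal_gen R Ds E =
     \<Inter>{I. radical_ideal R I \<and> diff_closed Ds I \<and> E \<subseteq> I}"

definition diff_spec :: "('a, 'b) ring_scheme \<Rightarrow> ('a \<Rightarrow> 'a) set \<Rightarrow> 'a set set" where
  "diff_spec R Ds = {P. primeideal P R \<and> diff_closed Ds P}"

definition kolchin_open :: "('a, 'b) ring_scheme \<Rightarrow> ('a \<Rightarrow> 'a) set \<Rightarrow> 'a set set \<Rightarrow> bool" where
  "kolchin_open R Ds U \<longleftrightarrow>
     (\<exists>E\<subseteq>carrier R. U = diff_spec R Ds - {P \<in> diff_spec R Ds. E \<subseteq> P})"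

text \<open>Elements of \<open>K(p)\<close> = Frac(A/p) are represented as equivalence classes of pairs
  \<open>(a,b)\<close>, \<open>b \<notin> p\<close>, with \<open>(a,b) ~ (c,d)\<close> iff \<open>ad - cb \<in> p\<close>; i.e. \<open>a/b\<close>.\<close>
definition frac_rel :: "('a, 'b) ring_scheme \<Rightarrow> 'a set \<Rightarrow> (('a \<times> 'a) \<times> ('a \<times> 'a)) set" where
  "frac_rel R P = {((a, b), (c, d)).
     a \<in> carrier R \<and> b \<in> carrier R - P \<and> c \<in> carrier R \<and> d \<in> carrier R - P \<and>
     (a \<otimes>\<^bsub>R\<^esub> d) \<ominus>\<^bsub>R\<^esub> (c \<otimes>\<^bsub>R\<^esub> b) \<in> P}"

definition frac :: "('a, 'b) ring_scheme \<Rightarrow> 'a set \<Rightarrow> 'a \<Rightarrow> 'a \<Rightarrow> ('a \<times> 'a) set" where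
  "frac R P a b = frac_rel R P `` {(a, b)}"

definition residue_field :: "('a, 'b) ring_scheme \<Rightarrow> 'a set \<Rightarrow> ('a \<times> 'a) set set" where
  "residue_field R P = {frac R P a b | a b. a \<in> carrier R \<and> b \<in> carrier R - P}"

text \<open>Multiplication in \<open>K(p)\<close> (well defined on classes; via representatives).\<close>
definition frac_mult ::
  "('a, 'b) ring_scheme \<Rightarrow> 'a set \<Rightarrow> ('a \<times> 'a) set \<Rightarrow> ('a \<times> 'a) set \<Rightarrow> ('a \<times> 'a) set" where
  "frac_mult R P x y =
     (let u = (SOME u. u \<in> x); v = (SOME v. v \<in> y)
      in frac R P (fst u \<otimes>\<^bsub>R\<^esub> fst v) (snd u \<otimes>\<^bsub>R\<^esub> snd v))"

definition regular_at ::
  "('a, 'b) ring_scheme \<Rightarrow> ('a \<Rightarrow> 'a) set \<Rightarrow> 'a set set \<Rightarrow> ('a set \<Rightarrow> ('a \<times> 'a) set) \<Rightarrow> 'a set \<Rightarrow> bool" where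
  "regular_at R Ds U f P \<longleftrightarrow>
     (\<exists>W. kolchin_open R Ds W \<and> W \<subseteq> U \<and> P \<in> W \<and>
        (\<exists>a\<in>carrier R. \<exists>b\<in>carrier R. \<forall>Q\<in>W. b \<notin> Q \<and> f Q = frac R Q a b))"

definition O' ::
  "('a, 'b) ring_scheme \<Rightarrow> ('a \<Rightarrow> 'a) set \<Rightarrow> 'a set set \<Rightarrow> ('a set \<Rightarrow> ('a \<times> 'a) set) set" where
  "O' R Ds U = {f. (\<forall>P\<in>U. f P \<in> residue_field R P) \<and> (\<forall>P\<in>U. regular_at R Ds U f P)}"

definition iota' :: "('a, 'b) ring_scheme \<Rightarrow> 'a \<Rightarrow> 'a set \<Rightarrow> ('a \<times> 'a) set" where
  "iota' R a = (\<lambda>P. frac R P a \<one>\<^bsub>R\<^esub>)"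

end

theory Submission
  imports Defs
begin

lemma (in cring) ideal_minus: "ideal I R \<Longrightarrow> x \<in> I \<Longrightarrow> y \<in> I \<Longrightarrow> x \<ominus> y \<in> I"
  by (simp add: a_minus_def additive_subgroup.a_closed additive_subgroup.a_inv_closed ideal.axioms(1))
lemma (in cring) t1: assumes "a \<in> carrier R" "b \<in> carrier R"
 shows "(a \<otimes> b) [^] (2::nat) = (a \<otimes> b) \<otimes> (a \<otimes> b)"
  using assms by (simp add: numeral_2_eq_2)
lemma (in cring) t2: assumes "a \<in> carrier R" "y \<in> carrier R" "x \<in> carrier R" "c \<in> carrier R"
 shows "(a \<otimes> y) \<otimes> (a \<otimes> y) = (a \<otimes> y) \<otimes> (x \<otimes> c \<oplus> a \<otimes> y) \<ominus> (x \<otimes> y) \<otimes> (a \<otimes> c)"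
  using assms by algebra
lemma (in cring) ideal_by_closure:
  assumes "I \<subseteq> carrier R" "\<zero> \<in> I" "\<And>x y. x \<in> I \<Longrightarrow> y \<in> I \<Longrightarrow> x \<oplus> y \<in> I"
    "\<And>x. x \<in> I \<Longrightarrow> \<ominus> x \<in> I"
    "\<And>x y. x \<in> I \<Longrightarrow> y \<in> carrier R \<Longrightarrow> y \<otimes> x \<in> I"
  shows "ideal I R"
proof -
  have r: "\<And>x y. x \<in> I \<Longrightarrow> y \<in> carrier R \<Longrightarrow> x \<otimes> y \<in> I"
    using assms(1,5) m_comm by (metis subsetD)
  show ?thesis
    using assms r by unfold_locales (auto simp flip: a_inv_def)
qed

lemma (in cring) kap:
  assumes rad: "radical_ideal R I" and der: "derivation R D" and cl: "\<forall>z\<in>I. D z \<in> I"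
    and x: "x \<in> carrier R" and y: "y \<in> carrier R" and xy: "x \<otimes> y \<in> I"
  shows "D x \<otimes> y \<in> I"
proof -
  have I: "ideal I R" using rad radical_ideal_def by blast
  have DD: "D \<in> carrier R \<rightarrow> carrier R" using der unfolding derivation_def by blast
  have Dc: "D x \<in> carrier R" "D y \<in> carrier R" using DD x y by auto
  have d: "D (x \<otimes> y) = x \<otimes> D y \<oplus> D x \<otimes> y" using der x y unfolding derivation_def by blast
  have 1: "D (x \<otimes> y) \<in> I" using cl xy by blast
  have 2: "(D x \<otimes> y) \<otimes> D (x \<otimes> y) \<in> I" using ideal.I_l_closed[OF I 1] Dc y by simp
  have 3: "(x \<otimes> y) \<otimes> (D x \<otimes> D y) \<in> I" using ideal.I_r_closed[OF I xy] Dc by simp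
  have eq: "(D x \<otimes> y) [^] (2::nat) = (D x \<otimes> y) \<otimes> D (x \<otimes> y) \<ominus> (x \<otimes> y) \<otimes> (D x \<otimes> D y)"
    unfolding d t1[OF Dc(1) y] by (rule t2[OF Dc(1) y x Dc(2)])
  have "(D x \<otimes> y) [^] (2::nat) \<in> I" unfolding eq using ideal_minus[OF I 2 3] .
  then show ?thesis using rad Dc y unfolding radical_ideal_def by blast
qed

definition rdi :: "('a, 'b) ring_scheme \<Rightarrow> ('a \<Rightarrow> 'a) set \<Rightarrow> 'a set \<Rightarrow> bool" where
  "rdi R Ds I \<longleftrightarrow> radical_ideal R I \<and> diff_closed Ds I"

lemma gen_props:
  fixes R :: "('a, 'b) ring_scheme" (structure)
  assumes dr: "diff_ring R Ds" and E: "E \<subseteq> carrier R"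
  shows "rdi R Ds (rad_diff_ideal_gen R Ds E)" "E \<subseteq> rad_diff_ideal_gen R Ds E"
    "rad_diff_ideal_gen R Ds E \<subseteq> carrier R"
    "\<And>J. rdi R Ds J \<Longrightarrow> E \<subseteq> J \<Longrightarrow> rad_diff_ideal_gen R Ds E \<subseteq> J"
proof -
  interpret cring R using dr diff_ring_def by blast
  let ?F = "{I. radical_ideal R I \<and> diff_closed Ds I \<and> E \<subseteq> I}"
  have car: "carrier R \<in> ?F"
    using oneideal E dr unfolding radical_ideal_def diff_closed_def diff_ring_def derivation_def
    by (auto simp: Pi_def)
  have g: "rad_diff_ideal_gen R Ds E = \<Inter>?F" by (simp add: rad_diff_ideal_gen_def)
  have id: "ideal (\<Inter>?F) R"
    by (rule i_Intersect) (use car radical_ideal_def in auto)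
  have rad: "radical_ideal R (\<Inter>?F)"
    using id unfolding radical_ideal_def by blast
  have dc: "diff_closed Ds (\<Inter>?F)"
    unfolding diff_closed_def by (auto simp: diff_closed_def)
  show "rdi R Ds (rad_diff_ideal_gen R Ds E)" by (simp add: rdi_def g rad dc)
  show "E \<subseteq> rad_diff_ideal_gen R Ds E" using g by auto
  show "rad_diff_ideal_gen R Ds E \<subseteq> carrier R" using g car by auto
  show "rad_diff_ideal_gen R Ds E \<subseteq> J" if "rdi R Ds J" "E \<subseteq> J" for J
  proof -
    have "J \<in> ?F" using that by (simp add: rdi_def)
    then show ?thesis unfolding g by (rule Inter_lower)
  qed
qed

lemma rdi_one:
  assumes "rdi R Ds J" "\<one>\<^bsub>R\<^esub> \<in> J" shows "J = carrier R"
  using assms ideal.one_imp_carrier unfolding rdi_def radical_ideal_def by blast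

lemma colon_rdi:
  fixes R :: "('a, 'b) ring_scheme" (structure)
  assumes dr: "diff_ring R Ds" and M: "rdi R Ds M" and b: "b \<in> carrier R"
  shows "rdi R Ds {x \<in> carrier R. x \<otimes>\<^bsub>R\<^esub> b \<in> M}"
proof -
  interpret cring R using dr diff_ring_def by blast
  let ?Q = "{x \<in> carrier R. x \<otimes> b \<in> M}"
  have I: "ideal M R" using M rdi_def radical_ideal_def by blast
  have idQ: "ideal ?Q R"
  proof (rule ideal_by_closure)
    show "?Q \<subseteq> carrier R" by auto
    show "\<zero> \<in> ?Q" using b I additive_subgroup.zero_closed ideal.axioms(1) by fastforce
    show "x \<oplus> y \<in> ?Q" if "x \<in> ?Q" "y \<in> ?Q" for x y
      using that b l_distr[of x y b] additive_subgroup.a_closed[OF ideal.axioms(1)[OF I]] by auto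
    show "\<ominus> x \<in> ?Q" if "x \<in> ?Q" for x
      using that b l_minus[of x b] additive_subgroup.a_inv_closed[OF ideal.axioms(1)[OF I]] by auto
    show "y \<otimes> x \<in> ?Q" if "x \<in> ?Q" "y \<in> carrier R" for x y
      using that b m_assoc[of y x b] ideal.I_l_closed[OF I] by auto
  qed
  have radQ: "radical_ideal R ?Q"
    unfolding radical_ideal_def
  proof (intro conjI idQ ballI allI impI)
    fix a and n :: nat assume a: "a \<in> carrier R" and an: "a [^] n \<in> ?Q"
    have "(a \<otimes> b) [^] Suc n = (a [^] n \<otimes> b) \<otimes> (a \<otimes> b [^] n)"
      using a b by (simp add: nat_pow_distrib m_ac)
    also have "\<dots> \<in> M" using an a b ideal.I_r_closed[OF I] by auto
    finally have "(a \<otimes> b) [^] Suc n \<in> M" .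
    then have "a \<otimes> b \<in> M" using M a b unfolding rdi_def radical_ideal_def by blast
    then show "a \<in> ?Q" using a by auto
  qed
  have dcQ: "diff_closed Ds ?Q"
    unfolding diff_closed_def
  proof (intro ballI)
    fix D x assume D: "D \<in> Ds" and x: "x \<in> ?Q"
    have der: "derivation R D" using dr D diff_ring_def by blast
    have cl: "\<forall>z\<in>M. D z \<in> M" using M D unfolding rdi_def diff_closed_def by blast
    have "D x \<otimes> b \<in> M" using kap[OF _ der cl, of x b] M x b rdi_def by auto
    moreover have "D x \<in> carrier R" using der x unfolding derivation_def by auto
    ultimately show "D x \<in> ?Q" by auto
  qed
  show ?thesis using radQ dcQ rdi_def by blast
qed

lemma max_prime:
  fixes R :: "('a, 'b) ring_scheme" (structure)
  assumes dr: "diff_ring R Ds" and M: "rdi R Ds M" and one: "\<one>\<^bsub>R\<^esub> \<notin> M"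
    and mx: "\<And>J. rdi R Ds J \<Longrightarrow> \<one>\<^bsub>R\<^esub> \<notin> J \<Longrightarrow> M \<subseteq> J \<Longrightarrow> J = M"
  shows "M \<in> diff_spec R Ds"
proof -
  interpret cring R using dr diff_ring_def by blast
  have I: "ideal M R" using M rdi_def radical_ideal_def by blast
  have "primeideal M R"
  proof (rule primeidealI[OF I is_cring])
    show "carrier R \<noteq> M" using one by auto
    fix a b assume a: "a \<in> carrier R" and b: "b \<in> carrier R" and ab: "a \<otimes> b \<in> M"
    let ?Q = "{x \<in> carrier R. x \<otimes> b \<in> M}"
    have Q: "rdi R Ds ?Q" using colon_rdi[OF dr M b] .
    have MQ: "M \<subseteq> ?Q" using ideal.I_r_closed[OF I] b additive_subgroup.a_subset[OF ideal.axioms(1)[OF I]] by auto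
    have aQ: "a \<in> ?Q" using a ab by auto
    show "a \<in> M \<or> b \<in> M"
    proof (cases "\<one> \<in> ?Q")
      case True then show ?thesis using b by auto
    next
      case False then have "?Q = M" using mx Q MQ by blast
      then show ?thesis using aQ by auto
    qed
  qed
  then show ?thesis using M unfolding diff_spec_def rdi_def by blast
qed

lemma directed_union:
  fixes R :: "('a, 'b) ring_scheme" (structure)
  assumes dr: "diff_ring R Ds" and ne: "F \<noteq> {}"
    and F: "\<And>I. I \<in> F \<Longrightarrow> rdi R Ds I \<and> \<one>\<^bsub>R\<^esub> \<notin> I"
    and dir: "\<And>I J. I \<in> F \<Longrightarrow> J \<in> F \<Longrightarrow> \<exists>K\<in>F. I \<union> J \<subseteq> K"
  shows "rdi R Ds (\<Union>F) \<and> \<one>\<^bsub>R\<^esub> \<notin> \<Union>F"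
proof -
  interpret cring R using dr diff_ring_def by blast
  have Iid: "ideal I R" if "I \<in> F" for I using F[OF that] rdi_def radical_ideal_def by blast
  have id: "ideal (\<Union>F) R"
  proof (rule ideal_by_closure)
    show "\<Union>F \<subseteq> carrier R" using Iid additive_subgroup.a_subset ideal.axioms(1) by (meson Union_least)
    show "\<zero> \<in> \<Union>F"
    proof -
      obtain I where I: "I \<in> F" using ne by blast
      show ?thesis using additive_subgroup.zero_closed[OF ideal.axioms(1)[OF Iid[OF I]]] I by blast
    qed
    show "x \<oplus> y \<in> \<Union>F" if xy: "x \<in> \<Union>F" "y \<in> \<Union>F" for x y
    proof -
      obtain I J where "I \<in> F" "J \<in> F" "x \<in> I" "y \<in> J" using xy by auto
      note IJ = this
      obtain K where K: "K \<in> F" "I \<union> J \<subseteq> K" using dir[OF IJ(1,2)] by blast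
      have "x \<oplus> y \<in> K"
        using additive_subgroup.a_closed[OF ideal.axioms(1)[OF Iid[OF K(1)]]] K IJ by blast
      then show ?thesis using K by blast
    qed
    show "\<ominus> x \<in> \<Union>F" if xF: "x \<in> \<Union>F" for x
    proof -
      obtain I where I: "I \<in> F" "x \<in> I" using xF by blast
      show ?thesis using additive_subgroup.a_inv_closed[OF ideal.axioms(1)[OF Iid[OF I(1)]] I(2)] I by blast
    qed
    show "y \<otimes> x \<in> \<Union>F" if xF: "x \<in> \<Union>F" "y \<in> carrier R" for x y
    proof -
      obtain I where I: "I \<in> F" "x \<in> I" using xF by blast
      show ?thesis using ideal.I_l_closed[OF Iid[OF I(1)] I(2) xF(2)] I by blast
    qed
  qed
  have rad: "radical_ideal R (\<Union>F)"
    unfolding radical_ideal_def using id F unfolding rdi_def radical_ideal_def by blast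
  have dc: "diff_closed Ds (\<Union>F)"
    using F unfolding rdi_def diff_closed_def by blast
  show ?thesis using rad dc F rdi_def by blast
qed

lemma (in cring) alg_refl: "a \<in> carrier R \<Longrightarrow> b \<in> carrier R \<Longrightarrow> a \<otimes> b \<ominus> a \<otimes> b = \<zero>"
  by algebra
lemma (in cring) alg_sym: "a \<in> carrier R \<Longrightarrow> b \<in> carrier R \<Longrightarrow> c \<in> carrier R \<Longrightarrow> d \<in> carrier R \<Longrightarrow>
   c \<otimes> b \<ominus> a \<otimes> d = \<ominus> (a \<otimes> d \<ominus> c \<otimes> b)"
  by algebra
lemma (in cring) alg_trans: "a \<in> carrier R \<Longrightarrow> b \<in> carrier R \<Longrightarrow> c \<in> carrier R \<Longrightarrow> d \<in> carrier R \<Longrightarrow>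
   e \<in> carrier R \<Longrightarrow> f \<in> carrier R \<Longrightarrow>
   d \<otimes> (a \<otimes> f \<ominus> e \<otimes> b) = f \<otimes> (a \<otimes> d \<ominus> c \<otimes> b) \<oplus> b \<otimes> (c \<otimes> f \<ominus> e \<otimes> d)"
  by algebra
lemma (in cring) alg_key: "b0 \<in> carrier R \<Longrightarrow> u1 \<in> carrier R \<Longrightarrow> u2 \<in> carrier R \<Longrightarrow>
   v1 \<in> carrier R \<Longrightarrow> v2 \<in> carrier R \<Longrightarrow> a' \<in> carrier R \<Longrightarrow> c \<in> carrier R \<Longrightarrow> a0 \<in> carrier R \<Longrightarrow>
   b0 \<otimes> ((u1 \<otimes> v1) \<otimes> \<one> \<ominus> a' \<otimes> (u2 \<otimes> v2)) =
   (c \<otimes> a0 \<ominus> a' \<otimes> b0) \<otimes> (u2 \<otimes> v2) \<ominus> (c \<otimes> u2) \<otimes> (a0 \<otimes> v2 \<ominus> v1 \<otimes> b0)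
     \<ominus> (c \<otimes> u2 \<ominus> u1 \<otimes> \<one>) \<otimes> (a0 \<otimes> v2 \<ominus> (a0 \<otimes> v2 \<ominus> v1 \<otimes> b0))"
  by algebra

lemma frac_equiv:
  fixes R :: "('a, 'b) ring_scheme" (structure)
  assumes "primeideal Q R"
  shows "equiv (carrier R \<times> (carrier R - Q)) (frac_rel R Q)"
proof -
  interpret primeideal Q R by fact
  have I: "ideal Q R" by (rule is_ideal)
  have z: "\<zero> \<in> Q" by simp
  show ?thesis
  proof (rule equivI)
    show "frac_rel R Q \<subseteq> (carrier R \<times> (carrier R - Q)) \<times> (carrier R \<times> (carrier R - Q))"
      unfolding frac_rel_def by auto
    show "refl_on (carrier R \<times> (carrier R - Q)) (frac_rel R Q)"
      unfolding refl_on_def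
    proof (intro conjI ballI)
      fix p assume p: "p \<in> carrier R \<times> (carrier R - Q)"
      obtain x y where xy: "p = (x, y)" by fastforce
      have xyc: "x \<in> carrier R" "y \<in> carrier R - Q" using p xy by auto
      have e0: "x \<otimes> y \<ominus> x \<otimes> y = \<zero>" using xyc alg_refl by blast
      have mem: "x \<otimes> y \<ominus> x \<otimes> y \<in> Q" unfolding e0 by (rule z)
      have "((x, y), (x, y)) \<in> frac_rel R Q" unfolding frac_rel_def using xyc mem by blast
      then show "(p, p) \<in> frac_rel R Q" using xy by simp
    qed
    show "sym (frac_rel R Q)"
    proof (rule symI)
      fix x y assume xy: "(x, y) \<in> frac_rel R Q"
      obtain a b where x: "x = (a, b)" by fastforce
      obtain c d where y: "y = (c, d)" by fastforce
      have h1: "a \<in> carrier R" "b \<in> carrier R - Q" "c \<in> carrier R" "d \<in> carrier R - Q"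
        "a \<otimes> d \<ominus> c \<otimes> b \<in> Q" using xy x y unfolding frac_rel_def by auto
      have e: "c \<otimes> b \<ominus> a \<otimes> d = \<ominus> (a \<otimes> d \<ominus> c \<otimes> b)"
        using h1 alg_sym by blast
      have "c \<otimes> b \<ominus> a \<otimes> d \<in> Q" unfolding e by (rule additive_subgroup.a_inv_closed[OF ideal.axioms(1)[OF I] h1(5)])
      then have "((c, d), (a, b)) \<in> frac_rel R Q" unfolding frac_rel_def using h1 by blast
      then show "(y, x) \<in> frac_rel R Q" using x y by simp
    qed
    show "trans (frac_rel R Q)"
    proof (rule transI)
      fix x y z assume xy: "(x, y) \<in> frac_rel R Q" and yz: "(y, z) \<in> frac_rel R Q"
      obtain a b where x: "x = (a, b)" by fastforce
      obtain c d where y: "y = (c, d)" by fastforce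
      obtain e f where z: "z = (e, f)" by fastforce
      have h1: "a \<in> carrier R" "b \<in> carrier R" "b \<notin> Q" "c \<in> carrier R" "d \<in> carrier R" "d \<notin> Q"
        "a \<otimes> d \<ominus> c \<otimes> b \<in> Q" using xy x y unfolding frac_rel_def by auto
      have h2: "e \<in> carrier R" "f \<in> carrier R" "f \<notin> Q" "c \<otimes> f \<ominus> e \<otimes> d \<in> Q"
        using yz y z unfolding frac_rel_def by auto
      have "d \<otimes> (a \<otimes> f \<ominus> e \<otimes> b) \<in> Q"
        unfolding alg_trans[OF h1(1,2,4,5) h2(1,2)]
        using h1 h2 I_l_closed by simp
      moreover have "a \<otimes> f \<ominus> e \<otimes> b \<in> carrier R" using h1 h2 by simp
      ultimately have "a \<otimes> f \<ominus> e \<otimes> b \<in> Q" using I_prime[OF h1(5)] h1(6) by blast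
      then have "((a, b), (e, f)) \<in> frac_rel R Q" unfolding frac_rel_def using h1 h2 by blast
      then show "(x, z) \<in> frac_rel R Q" using x z by simp
    qed
  qed
qed

lemma frac_key:
  fixes R :: "('a, 'b) ring_scheme" (structure)
  assumes pr: "primeideal Q R" and c: "c \<in> carrier R" and a': "a' \<in> carrier R"
    and a0: "a0 \<in> carrier R" and b0: "b0 \<in> carrier R" "b0 \<notin> Q"
    and cond: "c \<otimes> a0 \<ominus> a' \<otimes> b0 \<in> Q"
  shows "frac_mult R Q (frac R Q c \<one>) (frac R Q a0 b0) = frac R Q a' \<one>"
proof -
  interpret primeideal Q R by fact
  have eq: "equiv (carrier R \<times> (carrier R - Q)) (frac_rel R Q)" by (rule frac_equiv[OF pr])
  have one: "\<one> \<notin> Q" using I_notcarr one_imp_carrier by blast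
  have m1: "(c, \<one>) \<in> frac R Q c \<one>" unfolding frac_def
    by (rule equiv_class_self[OF eq]) (use c one in auto)
  have m2: "(a0, b0) \<in> frac R Q a0 b0" unfolding frac_def
    by (rule equiv_class_self[OF eq]) (use a0 b0 in auto)
  define u where "u = (SOME u. u \<in> frac R Q c \<one>)"
  define v where "v = (SOME v. v \<in> frac R Q a0 b0)"
  have "u \<in> frac R Q c \<one>" unfolding u_def using m1 by (rule someI)
  moreover obtain u1 u2 where u: "u = (u1, u2)" by fastforce
  ultimately have hu: "u1 \<in> carrier R" "u2 \<in> carrier R" "u2 \<notin> Q" "c \<otimes> u2 \<ominus> u1 \<otimes> \<one> \<in> Q"
    unfolding frac_def frac_rel_def by auto
  have "v \<in> frac R Q a0 b0" unfolding v_def using m2 by (rule someI)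
  moreover obtain v1 v2 where v: "v = (v1, v2)" by fastforce
  ultimately have hv: "v1 \<in> carrier R" "v2 \<in> carrier R" "v2 \<notin> Q" "a0 \<otimes> v2 \<ominus> v1 \<otimes> b0 \<in> Q"
    unfolding frac_def frac_rel_def by auto
  have fm: "frac_mult R Q (frac R Q c \<one>) (frac R Q a0 b0) = frac R Q (u1 \<otimes> v1) (u2 \<otimes> v2)"
    unfolding frac_mult_def Let_def u_def[symmetric] v_def[symmetric] u v by simp
  have uv2: "u2 \<otimes> v2 \<notin> Q" using I_prime hu hv by blast
  have t1: "(c \<otimes> a0 \<ominus> a' \<otimes> b0) \<otimes> (u2 \<otimes> v2) \<in> Q" using cond hu hv I_r_closed by simp
  have t2: "(c \<otimes> u2) \<otimes> (a0 \<otimes> v2 \<ominus> v1 \<otimes> b0) \<in> Q" using hv(4) hu c I_l_closed by simp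
  have t3: "(c \<otimes> u2 \<ominus> u1 \<otimes> \<one>) \<otimes> (a0 \<otimes> v2 \<ominus> (a0 \<otimes> v2 \<ominus> v1 \<otimes> b0)) \<in> Q"
    using hu(4) hu hv a0 b0 c I_r_closed by simp
  have "b0 \<otimes> ((u1 \<otimes> v1) \<otimes> \<one> \<ominus> a' \<otimes> (u2 \<otimes> v2)) \<in> Q"
    unfolding alg_key[OF b0(1) hu(1,2) hv(1,2) a' c a0]
    using ideal_minus[OF is_ideal ideal_minus[OF is_ideal t1 t2] t3] .
  moreover have kc: "(u1 \<otimes> v1) \<otimes> \<one> \<ominus> a' \<otimes> (u2 \<otimes> v2) \<in> carrier R"
    using hu hv a' by simp
  ultimately have k: "(u1 \<otimes> v1) \<otimes> \<one> \<ominus> a' \<otimes> (u2 \<otimes> v2) \<in> Q"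
    using I_prime[OF b0(1) kc] b0(2) by blast
  have "((u1 \<otimes> v1, u2 \<otimes> v2), (a', \<one>)) \<in> frac_rel R Q"
    unfolding frac_rel_def using k hu hv uv2 a' one by auto
  then have "frac R Q (u1 \<otimes> v1) (u2 \<otimes> v2) = frac R Q a' \<one>"
    unfolding frac_def by (rule equiv_class_eq[OF eq])
  then show ?thesis using fm by simp
qed

lemma (in cring) alg_c1: "b \<in> carrier R \<Longrightarrow> s \<in> carrier R \<Longrightarrow> a \<in> carrier R \<Longrightarrow> a0 \<in> carrier R \<Longrightarrow> b0 \<in> carrier R \<Longrightarrow>
  (b \<otimes> s) \<otimes> a0 \<ominus> (a \<otimes> s) \<otimes> b0 = s \<otimes> (b \<otimes> a0 \<ominus> a \<otimes> b0)"
  by algebra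

lemma local_good:
  fixes R :: "('a, 'b) ring_scheme" (structure)
  assumes dr: "diff_ring R Ds" and eta: "\<eta> \<in> O' R Ds (diff_spec R Ds)"
    and P: "P \<in> diff_spec R Ds"
  shows "\<exists>c\<in>carrier R. c \<notin> P \<and> (\<exists>a\<in>carrier R. \<forall>Q\<in>diff_spec R Ds.
               frac_mult R Q (iota' R c Q) (\<eta> Q) = iota' R a Q)"
proof -
  interpret cring R using dr diff_ring_def by blast
  let ?X = "diff_spec R Ds"
  have "regular_at R Ds ?X \<eta> P" using eta P unfolding O'_def by blast
  then have "\<exists>W. kolchin_open R Ds W \<and> W \<subseteq> ?X \<and> P \<in> W \<and>
        (\<exists>a\<in>carrier R. \<exists>b\<in>carrier R. \<forall>Q\<in>W. b \<notin> Q \<and> \<eta> Q = frac R Q a b)"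
    unfolding regular_at_def .
  then obtain W where W: "kolchin_open R Ds W" "W \<subseteq> ?X" "P \<in> W"
    and ex: "\<exists>a\<in>carrier R. \<exists>b\<in>carrier R. \<forall>Q\<in>W. b \<notin> Q \<and> \<eta> Q = frac R Q a b"
    by (elim exE conjE) 
  from ex obtain a b where ab: "a \<in> carrier R" "b \<in> carrier R" and Wq: "\<forall>Q\<in>W. b \<notin> Q \<and> \<eta> Q = frac R Q a b"
    by (elim bexE)
  have "\<exists>E\<subseteq>carrier R. W = ?X - {Q \<in> ?X. E \<subseteq> Q}"
    using W(1) unfolding kolchin_open_def .
  then obtain E where E: "E \<subseteq> carrier R" "W = ?X - {Q \<in> ?X. E \<subseteq> Q}"
    by (elim exE conjE)
  obtain s where s: "s \<in> E" "s \<notin> P" using W(3) E(2) by blast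
  have sc: "s \<in> carrier R" using s E by blast
  have prP: "primeideal P R" using P diff_spec_def by blast
  have bP: "b \<notin> P" using Wq W(3) by blast
  have cP: "b \<otimes> s \<notin> P" using primeideal.I_prime[OF prP ab(2) sc] bP s(2) by blast
  have main: "frac_mult R Q (iota' R (b \<otimes> s) Q) (\<eta> Q) = iota' R (a \<otimes> s) Q" if Q: "Q \<in> ?X" for Q
  proof -
    have prQ: "primeideal Q R" using Q diff_spec_def by blast
    have IQ: "ideal Q R" using prQ primeideal.axioms(1) by blast
    have cc: "b \<otimes> s \<in> carrier R" "a \<otimes> s \<in> carrier R" using ab sc by auto
    show ?thesis
    proof (cases "s \<in> Q")
      case True
      have "\<eta> Q \<in> residue_field R Q" using eta Q O'_def by blast
      then obtain a0 b0 where ab0: "\<eta> Q = frac R Q a0 b0" "a0 \<in> carrier R" "b0 \<in> carrier R" "b0 \<notin> Q"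
        unfolding residue_field_def by blast
      have "s \<otimes> (b \<otimes> a0 \<ominus> a \<otimes> b0) \<in> Q"
        using ideal.I_r_closed[OF IQ True] ab ab0 by simp
      then have cond: "(b \<otimes> s) \<otimes> a0 \<ominus> (a \<otimes> s) \<otimes> b0 \<in> Q"
        using alg_c1[OF ab(2) sc ab(1) ab0(2,3)] by simp
      show ?thesis unfolding iota'_def ab0(1)
        by (rule frac_key[OF prQ cc ab0(2,3,4) cond])
    next
      case False
      have QW: "Q \<in> W" using False Q E(2) s(1) by blast
      have ab0: "\<eta> Q = frac R Q a b" "b \<notin> Q" using Wq QW by auto
      have "s \<otimes> (b \<otimes> a \<ominus> a \<otimes> b) = \<zero>" using ab sc by algebra
      then have "s \<otimes> (b \<otimes> a \<ominus> a \<otimes> b) \<in> Q"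
        using additive_subgroup.zero_closed[OF ideal.axioms(1)[OF IQ]] by simp
      then have cond: "(b \<otimes> s) \<otimes> a \<ominus> (a \<otimes> s) \<otimes> b \<in> Q"
        using alg_c1[OF ab(2) sc ab(1) ab(1,2)] by simp
      show ?thesis unfolding iota'_def ab0(1)
        by (rule frac_key[OF prQ cc ab(1,2) ab0(2) cond])
    qed
  qed
  show ?thesis
  proof (rule bexI[of _ "b \<otimes> s"], intro conjI bexI[of _ "a \<otimes> s"] ballI)
    show "b \<otimes> s \<notin> P" by (rule cP)
    show "b \<otimes> s \<in> carrier R" "a \<otimes> s \<in> carrier R" using ab sc by auto
    show "frac_mult R Q (iota' R (b \<otimes> s) Q) (\<eta> Q) = iota' R (a \<otimes> s) Q" if "Q \<in> ?X" for Q
      using main[OF that] .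
  qed
qed

theorem lemma2p5:
  fixes R :: "('a, 'b) ring_scheme" and Ds :: "('a \<Rightarrow> 'a) set"
  assumes "diff_ring R Ds"
    and "\<eta> \<in> O' R Ds (diff_spec R Ds)"
  shows "\<exists>bs :: 'a list. set bs \<subseteq> carrier R \<and>
           (\<forall>b\<in>set bs. \<exists>a\<in>carrier R. \<forall>P\<in>diff_spec R Ds.
               frac_mult R P (iota' R b P) (\<eta> P) = iota' R a P) \<and>
           rad_diff_ideal_gen R Ds (set bs) = carrier R"
proof -
  note dr = assms(1)
  interpret cring R using dr diff_ring_def by blast
  let ?X = "diff_spec R Ds"
  define S where "S = {c \<in> carrier R. \<exists>a\<in>carrier R. \<forall>Q\<in>?X.
               frac_mult R Q (iota' R c Q) (\<eta> Q) = iota' R a Q}"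
  have Sc: "S \<subseteq> carrier R" unfolding S_def by blast
  have loc: "\<exists>c\<in>S. c \<notin> P" if P: "P \<in> ?X" for P
  proof -
    obtain c where c: "c \<in> carrier R" "c \<notin> P" and ex: "\<exists>a\<in>carrier R. \<forall>Q\<in>?X.
               frac_mult R Q (iota' R c Q) (\<eta> Q) = iota' R a Q"
      using local_good[OF dr assms(2) P] by blast
    have "c \<in> S" unfolding S_def using c(1) ex by simp
    then show ?thesis using c(2) by (rule bexI[rotated])
  qed
  have fin: "\<exists>S0. finite S0 \<and> S0 \<subseteq> S \<and> \<one>\<^bsub>R\<^esub> \<in> rad_diff_ideal_gen R Ds S0"
  proof (rule ccontr)
    assume nf: "\<not> ?thesis"
    define F where "F = rad_diff_ideal_gen R Ds ` {S0. finite S0 \<and> S0 \<subseteq> S}"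
    have Fp: "rdi R Ds I \<and> \<one>\<^bsub>R\<^esub> \<notin> I" if IF: "I \<in> F" for I
    proof -
      obtain S0 where S0: "finite S0" "S0 \<subseteq> S" "I = rad_diff_ideal_gen R Ds S0"
        using IF F_def by blast
      have S0c: "S0 \<subseteq> carrier R" using S0(2) Sc by (rule subset_trans)
      have "\<one>\<^bsub>R\<^esub> \<notin> rad_diff_ideal_gen R Ds S0" using nf S0(1,2) by blast
      then have "\<one>\<^bsub>R\<^esub> \<notin> I" using S0(3) by simp
      then show ?thesis using gen_props(1)[OF dr S0c] S0(3) by simp
    qed
    have "{} \<in> {S0. finite S0 \<and> S0 \<subseteq> S}" by simp
    then have Fne: "F \<noteq> {}" unfolding F_def by (metis empty_iff image_eqI)
    have Fdir: "\<exists>K\<in>F. I \<union> J \<subseteq> K" if IJF: "I \<in> F" "J \<in> F" for I J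
    proof -
      obtain S0 where S0: "finite S0" "S0 \<subseteq> S" "I = rad_diff_ideal_gen R Ds S0"
        using IJF(1) F_def by blast
      obtain S1 where S1: "finite S1" "S1 \<subseteq> S" "J = rad_diff_ideal_gen R Ds S1"
        using IJF(2) F_def by blast
      let ?K = "rad_diff_ideal_gen R Ds (S0 \<union> S1)"
      have KF: "?K \<in> F" unfolding F_def using S0 S1 by blast
      have U01: "S0 \<union> S1 \<subseteq> carrier R" using S0 S1 Sc by blast
      have Krdi: "rdi R Ds ?K" and Kin: "S0 \<union> S1 \<subseteq> ?K"
        using gen_props(1,2)[OF dr U01] by auto
      have S0c: "S0 \<subseteq> carrier R" using S0(2) Sc by (rule subset_trans)
      have S1c: "S1 \<subseteq> carrier R" using S1(2) Sc by (rule subset_trans)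
      have "S0 \<subseteq> ?K" using Kin by (rule subset_trans[rotated]) simp
      then have "I \<subseteq> ?K" unfolding S0(3) by (rule gen_props(4)[OF dr S0c Krdi])
      moreover have "S1 \<subseteq> ?K" using Kin by (rule subset_trans[rotated]) simp
      then have "J \<subseteq> ?K" unfolding S1(3) by (rule gen_props(4)[OF dr S1c Krdi])
      ultimately show ?thesis using KF by blast
    qed
    define U where "U = \<Union>F"
    have U: "rdi R Ds U \<and> \<one>\<^bsub>R\<^esub> \<notin> U" unfolding U_def
      by (rule directed_union[OF dr Fne Fp Fdir])
    have SU: "S \<subseteq> U"
    proof
      fix c assume c: "c \<in> S"
      have "rad_diff_ideal_gen R Ds {c} \<in> F" unfolding F_def using c by blast
      moreover have "c \<in> rad_diff_ideal_gen R Ds {c}" using gen_props(2)[OF dr, of "{c}"] c Sc by blast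
      ultimately show "c \<in> U" unfolding U_def by blast
    qed
    define A where "A = {J. rdi R Ds J \<and> \<one>\<^bsub>R\<^esub> \<notin> J \<and> U \<subseteq> J}"
    have UA: "U \<in> A" using U A_def by blast
    have "\<exists>M\<in>A. \<forall>Y\<in>A. M \<subseteq> Y \<longrightarrow> Y = M"
    proof (rule Zorn_Lemma2, intro ballI)
      fix C assume C: "C \<in> chains A"
      have CA: "C \<subseteq> A" and Cch: "\<And>I J. I \<in> C \<Longrightarrow> J \<in> C \<Longrightarrow> I \<subseteq> J \<or> J \<subseteq> I"
        using C unfolding chains_def chain_subset_def by blast+
      show "\<exists>V\<in>A. \<forall>Y\<in>C. Y \<subseteq> V"
      proof (cases "C = {}")
        case True then show ?thesis using UA by blast
      next
        case False
        have Cp: "rdi R Ds I \<and> \<one>\<^bsub>R\<^esub> \<notin> I" if "I \<in> C" for I using that CA A_def by blast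
        have Cdir: "\<exists>K\<in>C. I \<union> J \<subseteq> K" if "I \<in> C" "J \<in> C" for I J
          using Cch[OF that] that by (metis Un_absorb1 Un_absorb2 subset_refl)
        have "rdi R Ds (\<Union>C) \<and> \<one>\<^bsub>R\<^esub> \<notin> \<Union>C" by (rule directed_union[OF dr False Cp Cdir])
        moreover have "U \<subseteq> \<Union>C" using False CA A_def by blast
        ultimately have "\<Union>C \<in> A" unfolding A_def by blast
        then show ?thesis by blast
      qed
    qed
    then obtain M where MA: "M \<in> A" and Mmax: "\<forall>Y\<in>A. M \<subseteq> Y \<longrightarrow> Y = M" by blast
    have Mrdi: "rdi R Ds M" and M1: "\<one>\<^bsub>R\<^esub> \<notin> M" and UM: "U \<subseteq> M" using MA A_def by auto
    have "M \<in> ?X"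
    proof (rule max_prime[OF dr Mrdi M1])
      fix J assume "rdi R Ds J" "\<one>\<^bsub>R\<^esub> \<notin> J" "M \<subseteq> J"
      then have "J \<in> A" using UM A_def by blast
      then show "J = M" using Mmax \<open>M \<subseteq> J\<close> by blast
    qed
    then obtain c where "c \<in> S" "c \<notin> M" using loc by blast
    then show False using SU UM by blast
  qed
  then obtain S0 where S0: "finite S0" "S0 \<subseteq> S" "\<one>\<^bsub>R\<^esub> \<in> rad_diff_ideal_gen R Ds S0" by blast
  obtain bs where bs: "set bs = S0" using finite_list[OF S0(1)] by blast
  have S0c: "S0 \<subseteq> carrier R" using S0 Sc by blast
  have gen: "rad_diff_ideal_gen R Ds S0 = carrier R"
    by (rule rdi_one[OF gen_props(1)[OF dr S0c] S0(3)])
  show ?thesis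
  proof (intro exI conjI)
    show "set bs \<subseteq> carrier R" using bs S0c by simp
    show "\<forall>b\<in>set bs. \<exists>a\<in>carrier R. \<forall>P\<in>diff_spec R Ds.
               frac_mult R P (iota' R b P) (\<eta> P) = iota' R a P"
      using bs S0(2) unfolding S_def by blast
    show "rad_diff_ideal_gen R Ds (set bs) = carrier R" using bs gen by simp
  qed
qed

end
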